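(* For all integers $d\ge 3$ and $0\le j\le \left\lfloor \frac{3(d-1)}{2}\right\rfloor$, $$\operatorname{sign}(d,j)=\operatorname{triv}(d-2,j-3).$$
   Context: $\Bbbk$ is an algebraically closed field of characteristic $0$. For an integer $d\ge 1$, $A(d)=\Bbbk[x_1,x_2,x_3]/(x_1^d,x_2^d,x_3^d)=\bigoplus_j A(d)_j$ with its standard grading, where $A(d)_j=0$ for $j<0$ (so $A(1)=\Bbbk$ in degree $0$). $S_3$ acts on $A(d)$ by permuting variables. The linear map $E:A(d)_{j+1}\to A(d)_j$ is defined on the monomial basis by $E(x_1^{a_1}x_2^{a_2}x_3^{a_3})=\sum_{k=1}^{3} a_k(d-a_k)\,x_1^{a_1}\cdots x_k^{a_k-1}\cdots x_3^{a_3}$; it commutes with the $S_3$-action. $\operatorname{triv}(d,j)$ and $\operatorname{sign}(d,j)$ denote the multiplicities of the trivial and sign representations of $S_3$ in $\operatorname{Ker}(E)\cap A(d)_j$ (zero when $j<0$). *)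

theory Defs
  imports Main "HOL-Library.Function_Algebras" "HOL-Combinatorics.Permutations" "HOL-Computational_Algebra.Polynomial"
begin

text \<open>A monomial x1^a0 x2^a1 x3^a2 is represented by its exponent vector
  a :: nat => nat, with a i = 0 for i >= 3 (variables indexed 0,1,2).
  An element of A(d) is a coefficient function on exponent vectors.\<close>

definition mons :: "nat \<Rightarrow> nat \<Rightarrow> (nat \<Rightarrow> nat) set" where
  "mons d j = {a. (\<forall>i<3. a i < d) \<and> (\<forall>i\<ge>3. a i = 0) \<and> a 0 + a 1 + a 2 = j}"

definition Acomp :: "nat \<Rightarrow> nat \<Rightarrow> ((nat \<Rightarrow> nat) \<Rightarrow> 'k::field) set" where
  "Acomp d j = {f. \<forall>a. a \<notin> mons d j \<longrightarrow> f a = 0}"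

text \<open>Coefficient of the monomial b in E(x^a).\<close>
definition Ecoef :: "nat \<Rightarrow> (nat \<Rightarrow> nat) \<Rightarrow> (nat \<Rightarrow> nat) \<Rightarrow> 'k::field" where
  "Ecoef d a b = (\<Sum>k<3. if 1 \<le> a k \<and> b = a(k := a k - 1)
                          then of_nat (a k * (d - a k)) else 0)"

definition Emap :: "nat \<Rightarrow> nat \<Rightarrow> ((nat \<Rightarrow> nat) \<Rightarrow> 'k::field) \<Rightarrow> ((nat \<Rightarrow> nat) \<Rightarrow> 'k)" where
  "Emap d j f = (\<lambda>b. \<Sum>a\<in>mons d j. f a * Ecoef d a b)"

definition kerE :: "nat \<Rightarrow> nat \<Rightarrow> ((nat \<Rightarrow> nat) \<Rightarrow> 'k::field) set" where
  "kerE d j = {f \<in> Acomp d j. Emap d j f = (\<lambda>_. 0)}"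

text \<open>Action of a permutation s of {0,1,2} (i.e. of S_3) on A(d):
  s sends x_i to x_(s i), hence (s.f)(b) = f (b o s).\<close>
definition act :: "(nat \<Rightarrow> nat) \<Rightarrow> ((nat \<Rightarrow> nat) \<Rightarrow> 'k) \<Rightarrow> ((nat \<Rightarrow> nat) \<Rightarrow> 'k)" where
  "act s f = (\<lambda>b. f (b \<circ> s))"

definition fscale :: "'k::field \<Rightarrow> ((nat \<Rightarrow> nat) \<Rightarrow> 'k) \<Rightarrow> ((nat \<Rightarrow> nat) \<Rightarrow> 'k)" where
  "fscale c f = (\<lambda>x. c * f x)"

text \<open>Multiplicity of the trivial representation = dim Hom_S3(triv, V) = dim of
  the S_3-fixed subspace; multiplicity of the sign representation = dim of the
  subspace on which S_3 acts by the sign character.\<close>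
definition triv :: "'k::field itself \<Rightarrow> nat \<Rightarrow> int \<Rightarrow> nat" where
  "triv K d j = (if j < 0 then 0 else
     vector_space.dim (fscale :: 'k \<Rightarrow> _)
       {f \<in> (kerE d (nat j) :: ((nat \<Rightarrow> nat) \<Rightarrow> 'k) set).
          \<forall>s. s permutes {0,1,2::nat} \<longrightarrow> act s f = f})"

definition sgn_mult :: "'k::field itself \<Rightarrow> nat \<Rightarrow> int \<Rightarrow> nat" where
  "sgn_mult K d j = (if j < 0 then 0 else
     vector_space.dim (fscale :: 'k \<Rightarrow> _)
       {f \<in> (kerE d (nat j) :: ((nat \<Rightarrow> nat) \<Rightarrow> 'k) set).
          \<forall>s. s permutes {0,1,2::nat} \<longrightarrow> act s f = fscale (of_int (sign s)) f})"

definition alg_closed :: "'k::field itself \<Rightarrow> bool" where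
  "alg_closed K \<longleftrightarrow> (\<forall>p :: 'k poly. degree p \<ge> 1 \<longrightarrow> (\<exists>x. poly p x = 0))"

end

theory Submission
  imports Defs
begin


global_interpretation fs: vector_space "fscale :: 'k::field \<Rightarrow> ((nat\<Rightarrow>nat)\<Rightarrow>'k) \<Rightarrow> _"
  by unfold_locales (auto simp: fscale_def algebra_simps fun_eq_iff)

context vector_space begin

lemma span_inter_disjoint:
  assumes ind: "independent (A \<union> B)" and disj: "A \<inter> B = {}"
    and fA: "finite A" and fB: "finite B"
    and xA: "x \<in> span A" and xB: "x \<in> span B"
  shows "x = 0"
proof -
  obtain u where u: "x = (\<Sum>a\<in>A. u a *s a)" using xA fA span_finite by auto
  obtain w where w: "x = (\<Sum>b\<in>B. w b *s b)" using xB fB span_finite by auto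
  define v where "v c = (if c \<in> A then u c else - w c)" for c
  have "(\<Sum>c\<in>A \<union> B. v c *s c) = (\<Sum>c\<in>A. v c *s c) + (\<Sum>c\<in>B. v c *s c)"
    using fA fB disj by (simp add: sum.union_disjoint)
  also have "(\<Sum>c\<in>A. v c *s c) = x" using u by (simp add: v_def)
  also have "(\<Sum>c\<in>B. v c *s c) = (\<Sum>c\<in>B. - (w c *s c))"
    using disj by (intro sum.cong) (auto simp: v_def scale_minus_left)
  also have "\<dots> = - x" using w by (simp add: sum_negf)
  finally have "(\<Sum>c\<in>A \<union> B. v c *s c) = 0" by simp
  then have "\<forall>c\<in>A. v c = 0" using independentD[OF ind, of "A \<union> B" v] fA fB by auto
  then show ?thesis using u by (simp add: v_def)
qed

lemma dim_le_of_fin: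
  assumes "V \<subseteq> span W" "finite B" "W \<subseteq> span B"
  shows "dim V \<le> dim W"
proof -
  obtain C where C: "C \<subseteq> W" "independent C" "W \<subseteq> span C" "card C = dim W"
    using basis_exists by blast
  have "finite C" using independent_span_bound[OF assms(2) C(2)] C(1) assms(3) by auto
  have "V \<subseteq> span C" using assms(1) C(3) by (metis span_mono span_span subset_trans)
  then show ?thesis using dim_le_card[OF _ \<open>finite C\<close>] C(4) by simp
qed

lemma rank_nullity:
  assumes V: "subspace V" and fB: "finite B" and VB: "V \<subseteq> span B"
    and lf: "Vector_Spaces.linear scale scale f"
  shows "dim V = dim {x\<in>V. f x = 0} + dim (f ` V)"
proof -
  interpret lf: Vector_Spaces.linear scale scale f by fact
  define K where "K = {x\<in>V. f x = 0}"
  have "K = V \<inter> {x. f x = 0}" by (auto simp: K_def)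
  then have sK: "subspace K" using V lf.subspace_kernel subspace_inter by simp
  obtain BK where BK: "BK \<subseteq> K" "independent BK" "K \<subseteq> span BK"
    using maximal_independent_subset by blast
  have "BK \<subseteq> V" using BK(1) by (auto simp: K_def)
  obtain BV where BV: "BK \<subseteq> BV" "BV \<subseteq> V" "independent BV" "V \<subseteq> span BV"
    using maximal_independent_subset_extend[OF \<open>BK \<subseteq> V\<close> BK(2)] by blast
  have fBV: "finite BV" using independent_span_bound[OF fB BV(3)] BV(2) VB by auto
  have fBK: "finite BK" using fBV BV(1) finite_subset by blast
  define C where "C = BV - BK"
  have fC: "finite C" using fBV by (simp add: C_def)
  have dV: "dim V = card BV" using basis_card_eq_dim[OF BV(2) BV(4) BV(3)] by simp
  have dK: "dim K = card BK" using basis_card_eq_dim[OF BK(1) BK(3) BK(2)] by simp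
  have spanCV: "span C \<subseteq> V" using BV(2) V by (metis C_def Diff_subset span_minimal subset_trans)
  have injC: "inj_on f (span C)"
  proof -
    have "x = 0" if x: "x \<in> span C" "f x = 0" for x
    proof -
      have "x \<in> K" using x spanCV by (auto simp: K_def)
      then have "x \<in> span BK" using BK(3) by auto
      moreover have "BK \<union> C = BV" "BK \<inter> C = {}" using BV(1) by (auto simp: C_def)
      ultimately show ?thesis using span_inter_disjoint[of BK C x] BV(3) fBK fC x(1) by auto
    qed
    then show ?thesis using lf.inj_on_iff_eq_0[OF subspace_span] by blast
  qed
  have indfC: "independent (f ` C)"
    using lf.independent_injective_image[OF _ injC] BV(3) independent_mono C_def by blast
  have cardfC: "card (f ` C) = card C"
    using card_image inj_on_subset[OF injC span_superset] by blast
  have "f ` V \<subseteq> span (f ` C)"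
  proof
    fix y assume "y \<in> f ` V"
    then obtain x where x: "x \<in> V" "y = f x" by auto
    then have "x \<in> span BV" using BV(4) by auto
    then have "y \<in> span (f ` BV)" using x lf.span_image by auto
    moreover have "f ` BV \<subseteq> insert 0 (f ` C)"
      using BV(1) BK(1) by (auto simp: C_def K_def)
    ultimately show "y \<in> span (f ` C)"
      by (metis span_insert_0 span_mono subsetD)
  qed
  moreover have "f ` C \<subseteq> f ` V" using BV(2) by (auto simp: C_def)
  ultimately have "dim (f ` V) = card (f ` C)"
    using basis_card_eq_dim[of "f ` C" "f ` V"] indfC by auto
  then have "dim (f ` V) = card C" using cardfC by simp
  moreover have "card BV = card BK + card C"
    using BV(1) fBV by (simp add: C_def card_Diff_subset fBK card_mono)
  ultimately show ?thesis using dV dK K_def by simp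
qed

end

definition Eop :: "nat \<Rightarrow> ((nat\<Rightarrow>nat)\<Rightarrow>'k::field) \<Rightarrow> ((nat\<Rightarrow>nat)\<Rightarrow>'k)" where
 "Eop d f = (\<lambda>b. \<Sum>k<3. f (b(k := Suc (b k))) * of_nat (Suc (b k) * (d - Suc (b k))))"

definition Fop :: "nat \<Rightarrow> ((nat\<Rightarrow>nat)\<Rightarrow>'k::field) \<Rightarrow> ((nat\<Rightarrow>nat)\<Rightarrow>'k)" where
 "Fop d f = (\<lambda>b. \<Sum>k<3. if 1 \<le> b k \<and> b k < d then f (b(k := b k - 1)) else 0)"

lemma three: "{..<3::nat} = {0,1,2}" by auto

lemma comm_pt:
  fixes f :: "(nat\<Rightarrow>nat)\<Rightarrow>'k::field"
  assumes A: "\<And>i. i < 3 \<Longrightarrow> f b \<noteq> 0 \<Longrightarrow> b i < d"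
  shows "Eop d (Fop d f) b = Fop d (Eop d f) b + of_int (3*(int d - 1) - 2*int (b 0 + b 1 + b 2)) * f b"
proof -
  define c where "c m = (of_nat (m * (d - m)) :: 'k)" for m
  define EFt where "EFt k l = (if 1 \<le> (b(k:=Suc (b k))) l \<and> (b(k:=Suc (b k))) l < d
     then f ((b(k:=Suc (b k)))(l := (b(k:=Suc (b k))) l - 1)) else 0) * c (Suc (b k))" for k l
  define FEt where "FEt k l = (if 1 \<le> b l \<and> b l < d then f ((b(l:=b l - 1))(k:= Suc ((b(l:=b l - 1)) k)))
     * c (Suc ((b(l:=b l - 1)) k)) else 0)" for k l
  have EF: "Eop d (Fop d f) b = (\<Sum>k<3. \<Sum>l<3. EFt k l)"
    by (simp add: Eop_def Fop_def EFt_def c_def sum_distrib_right)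
  have "Fop d (Eop d f) b = (\<Sum>l<3. \<Sum>k<3. FEt k l)"
    unfolding Fop_def Eop_def FEt_def c_def
    by (intro sum.cong refl) auto
  then have FE: "Fop d (Eop d f) b = (\<Sum>k<3. \<Sum>l<3. FEt k l)"
    using sum.swap by metis
  have D: "EFt k l - FEt k l = (if k = l then of_int (int d - 1 - 2 * int (b k)) * f b else 0)"
    if "k < 3" "l < 3" for k l
  proof (cases "k = l")
    case False
    then show ?thesis by (simp add: EFt_def FEt_def fun_upd_twist)
  next
    case True
    show ?thesis
    proof (cases "f b = 0")
      case True
      then show ?thesis using \<open>k = l\<close> by (simp add: EFt_def FEt_def c_def)
    next
      case False
      then have bk: "b k < d" using A that by auto
      have e1: "EFt k k = c (Suc (b k)) * f b"
        by (auto simp: EFt_def c_def)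
      have e2: "FEt k k = c (b k) * f b"
        using bk by (cases "b k = 0") (auto simp: FEt_def c_def)
      obtain m where m: "d = Suc (b k) + m" using bk less_imp_Suc_add by blast
      have "int (Suc (b k) * (d - Suc (b k))) - int (b k * (d - b k)) = int d - 1 - 2 * int (b k)"
        unfolding m by (simp add: algebra_simps)
      then have "c (Suc (b k)) - c (b k) = of_int (int d - 1 - 2 * int (b k))"
        unfolding c_def by (metis of_int_diff of_int_of_nat_eq)
      moreover have "EFt k k - FEt k k = (c (Suc (b k)) - c (b k)) * f b"
        by (simp add: e1 e2 algebra_simps)
      ultimately show ?thesis using \<open>k = l\<close> by simp
    qed
  qed
  have "Eop d (Fop d f) b - Fop d (Eop d f) b = (\<Sum>k<3. \<Sum>l<3. EFt k l - FEt k l)"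
    unfolding EF FE by (simp add: sum_subtractf)
  also have "\<dots> = (\<Sum>k<3. \<Sum>l<3. (if k = l then of_int (int d - 1 - 2 * int (b k)) * f b else 0))"
    using D by (intro sum.cong refl) auto
  also have "\<dots> = of_int (3*(int d - 1) - 2*int (b 0 + b 1 + b 2)) * f b"
    by (simp add: three algebra_simps)
  finally show ?thesis by (simp add: algebra_simps)
qed

lemma fin_mons: "finite (mons d j)"
proof -
  have "mons d j \<subseteq> (\<lambda>(x,y,z). (\<lambda>i. if i = 0 then x else if i = 1 then y else if i = 2 then z else 0))
     ` ({..<d} \<times> {..<d} \<times> {..<d})" (is "_ \<subseteq> ?g ` ?S")
  proof
    fix a assume a: "a \<in> mons d j"
    then have "a = ?g (a 0, a 1, a 2)"
      by (auto simp: mons_def fun_eq_iff)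
    moreover have "(a 0, a 1, a 2) \<in> ?S" using a by (auto simp: mons_def)
    ultimately show "a \<in> ?g ` ?S" by blast
  qed
  then show ?thesis by (rule finite_subset) auto
qed

lemma k3: "(k::nat) < 3 \<Longrightarrow> k = 0 \<or> k = 1 \<or> k = 2" by auto

lemma up_mons:
  assumes "k < 3" "a(k := Suc (a k)) \<in> mons d j"
  shows "1 \<le> j \<and> a \<in> mons d (j - 1)"
  using k3[OF assms(1)] assms(2) by (auto simp: mons_def split: if_splits)

lemma down_mons:
  assumes "k < 3" "1 \<le> b k" "b k < d" "b(k := b k - 1) \<in> mons d j"
  shows "b \<in> mons d (Suc j)"
  using k3[OF assms(1)] assms(2-4) by (auto simp: mons_def split: if_splits)

lemma Acomp_nz: "f \<in> Acomp d j \<Longrightarrow> f b \<noteq> 0 \<Longrightarrow> b \<in> mons d j"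
  by (auto simp: Acomp_def)

lemma Eop_Acomp:
  assumes f: "f \<in> Acomp d j" and j: "1 \<le> j"
  shows "Eop d f \<in> Acomp d (j - 1)"
  unfolding Acomp_def
proof (intro CollectI allI impI)
  fix a assume a: "a \<notin> mons d (j - 1)"
  have "f (a(k := Suc (a k))) = 0" if "k < 3" for k
    using up_mons[OF that] a Acomp_nz[OF f] by blast
  then show "Eop d f a = 0" by (simp add: Eop_def)
qed

lemma Eop_Acomp0:
  assumes f: "f \<in> Acomp d 0"
  shows "Eop d f = 0"
proof
  fix a
  have "f (a(k := Suc (a k))) = 0" if "k < 3" for k
    using up_mons[OF that] Acomp_nz[OF f] by force
  then show "Eop d f a = 0 a" by (simp add: Eop_def)
qed

lemma Fop_Acomp:
  assumes f: "f \<in> Acomp d j"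
  shows "Fop d f \<in> Acomp d (Suc j)"
  unfolding Acomp_def
proof (intro CollectI allI impI)
  fix b assume b: "b \<notin> mons d (Suc j)"
  have "(if 1 \<le> b k \<and> b k < d then f (b(k := b k - 1)) else 0) = 0" if "k < 3" for k
    using down_mons[OF that] b Acomp_nz[OF f] by auto
  then show "Fop d f b = 0" by (simp add: Fop_def)
qed

lemma comm:
  fixes f :: "(nat\<Rightarrow>nat)\<Rightarrow>'k::field"
  assumes f: "f \<in> Acomp d j"
  shows "Eop d (Fop d f) = Fop d (Eop d f) + fscale (of_int (3*(int d - 1) - 2*int j)) f"
proof
  fix b
  show "Eop d (Fop d f) b = (Fop d (Eop d f) + fscale (of_int (3*(int d - 1) - 2*int j)) f) b"
  proof (cases "f b = 0")
    case True
    then show ?thesis using comm_pt[where b=b and f=f and d=d] by (simp add: fscale_def)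
  next
    case False
    then have "b \<in> mons d j" using Acomp_nz[OF f] by auto
    then show ?thesis using comm_pt[where b=b and f=f and d=d] by (auto simp: fscale_def mons_def)
  qed
qed

lemma Eop_add: "Eop d (f + g) = Eop d f + Eop d g"
  by (simp add: Eop_def fun_eq_iff sum.distrib algebra_simps)
lemma Eop_scale: "Eop d (fscale c f) = fscale c (Eop d f)"
  by (simp add: Eop_def fun_eq_iff fscale_def sum_distrib_left algebra_simps)
lemma Fop_add: "Fop d (f + g) = Fop d f + Fop d g"
  by (auto simp: Fop_def fun_eq_iff sum.distrib[symmetric] intro!: sum.cong)
lemma Fop_scale: "Fop d (fscale c f) = fscale c (Fop d f)"
  by (auto simp: Fop_def fun_eq_iff fscale_def sum_distrib_left intro!: sum.cong)

lemma fscale_eq_0: "fscale c (v::(nat\<Rightarrow>nat)\<Rightarrow>'k::field) = 0 \<longleftrightarrow> c = 0 \<or> v = 0"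
  by (auto simp: fscale_def fun_eq_iff)

lemma Fop_0: "Fop d 0 = 0"
  by (simp add: Fop_def fun_eq_iff zero_fun_def)

lemma fscale_cancel: "fscale c (v::(nat\<Rightarrow>nat)\<Rightarrow>'k::field) = fscale a v \<Longrightarrow> v \<noteq> 0 \<Longrightarrow> c = a"
  by (auto simp: fscale_def fun_eq_iff)

lemma eig:
  fixes v :: "(nat\<Rightarrow>nat)\<Rightarrow>'k::field"
  shows "v \<in> Acomp d j \<Longrightarrow> v \<noteq> 0 \<Longrightarrow> Eop d (Fop d v) = fscale c v \<Longrightarrow>
    \<exists>i\<le>j. c = of_int (\<Sum>m\<le>i. 3*(int d - 1) - 2*int (j - m))"
proof (induction j arbitrary: v c)
  case 0
  have "Eop d v = 0" using Eop_Acomp0[OF 0(1)] .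
  then have "fscale c v = fscale (of_int (3*(int d - 1))) v"
    using comm[OF 0(1)] 0(3) by (simp add: Fop_0)
  then have "c = of_int (3*(int d - 1))" using 0(2)
    by (rule fscale_cancel)
  then show ?case by simp
next
  case (Suc n)
  define h :: 'k where "h = of_int (3*(int d - 1) - 2*int (Suc n))"
  have FE: "Fop d (Eop d v) = fscale (c - h) v"
    using comm[OF Suc(2)] Suc(4) by (simp add: h_def fscale_def fun_eq_iff algebra_simps)
  show ?case
  proof (cases "Eop d v = 0")
    case True
    then have "fscale (c - h) v = 0" using FE Fop_0 by metis
    then have "c = h" using Suc(3) fscale_eq_0[of "c - h" v] by simp
    then show ?thesis by (intro exI[of _ 0]) (simp add: h_def)
  next
    case False
    have w: "Eop d v \<in> Acomp d n" using Eop_Acomp[OF Suc(2)] by simp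
    have "Eop d (Fop d (Eop d v)) = fscale (c - h) (Eop d v)"
      using FE Eop_scale by metis
    from Suc.IH[OF w False this] obtain i where i: "i \<le> n"
      "c - h = of_int (\<Sum>m\<le>i. 3*(int d - 1) - 2*int (n - m))" by blast
    have "(\<Sum>m\<le>Suc i. 3*(int d - 1) - 2*int (Suc n - m)) =
       (3*(int d - 1) - 2*int (Suc n)) + (\<Sum>m\<le>i. 3*(int d - 1) - 2*int (n - m))"
      by (subst sum.atMost_Suc_shift) simp
    moreover have "c = h + of_int (\<Sum>m\<le>i. 3*(int d - 1) - 2*int (n - m))"
      using i(2) by (simp add: diff_eq_eq)
    ultimately have "c = of_int (\<Sum>m\<le>Suc i. 3*(int d - 1) - 2*int (Suc n - m))"
      unfolding h_def by (simp only: of_int_add[symmetric])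
    then show ?thesis using i(1) by (intro exI[of _ "Suc i"]) simp
  qed
qed

lemma EF_inj:
  fixes v :: "(nat\<Rightarrow>nat)\<Rightarrow>'k::field_char_0"
  assumes "v \<in> Acomp d j" "2*j < 3*(d - 1)" "Eop d (Fop d v) = 0"
  shows "v = 0"
proof (rule ccontr)
  assume "v \<noteq> 0"
  moreover have "Eop d (Fop d v) = fscale 0 v" using assms(3) by (simp add: fscale_def fun_eq_iff)
  ultimately obtain i where i: "i \<le> j" "(0::'k) = of_int (\<Sum>m\<le>i. 3*(int d - 1) - 2*int (j - m))"
    using eig[OF assms(1)] by blast
  have "(\<Sum>m\<le>i. 3*(int d - 1) - 2*int (j - m)) > 0"
  proof (rule sum_pos)
    show "3*(int d - 1) - 2*int (j - m) > 0" if "m \<in> {..i}" for m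
    proof -
      have "m \<le> j" using that i(1) by auto
      then have "int (j - m) = int j - int m" by simp
      moreover have "2 * int j < 3 * (int d - 1)" using assms(2) by (cases d) auto
      ultimately show ?thesis by linarith
    qed
  qed auto
  then show False using i(2) by (metis of_int_0_eq_iff less_irrefl)
qed


lemma comp_upd: "inj s \<Longrightarrow> (b \<circ> s)(k := v) = (b(s k := v)) \<circ> s"
  by (auto simp: fun_eq_iff inj_eq)

lemma perm3: "s permutes {0,1,2::nat} \<Longrightarrow> s permutes {..<3}"
  by (simp add: three)

lemma Eop_act:
  assumes s: "s permutes {0,1,2::nat}"
  shows "act s (Eop d f) = Eop d (act s f)"
proof
  fix b
  have inj: "inj s" using s permutes_inj by blast
  define g where "g m = f ((b(m := Suc (b m))) \<circ> s) * of_nat (Suc (b m) * (d - Suc (b m)))" for m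
  have "act s (Eop d f) b = (\<Sum>k<3. f ((b \<circ> s)(k := Suc (b (s k)))) * of_nat (Suc (b (s k)) * (d - Suc (b (s k)))))"
    unfolding act_def Eop_def by simp
  also have "\<dots> = (\<Sum>k<3. g (s k))"
    unfolding g_def comp_upd[OF inj] ..
  also have "\<dots> = (\<Sum>k<3. g k)"
    using sum.permute[OF perm3[OF s], of g] by (simp add: comp_def)
  also have "\<dots> = Eop d (act s f) b" by (simp add: g_def Eop_def act_def)
  finally show "act s (Eop d f) b = Eop d (act s f) b" .
qed

lemma Fop_act:
  assumes s: "s permutes {0,1,2::nat}"
  shows "act s (Fop d f) = Fop d (act s f)"
proof
  fix b
  have inj: "inj s" using s permutes_inj by blast
  define g where "g m = (if 1 \<le> b m \<and> b m < d then f ((b(m := b m - 1)) \<circ> s) else 0)" for m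
  have "act s (Fop d f) b = (\<Sum>k<3. if 1 \<le> b (s k) \<and> b (s k) < d then f ((b \<circ> s)(k := b (s k) - 1)) else 0)"
    by (simp only: act_def Fop_def o_apply)
  also have "\<dots> = (\<Sum>k<3. g (s k))"
    unfolding g_def comp_upd[OF inj] ..
  also have "\<dots> = (\<Sum>k<3. g k)"
    using sum.permute[OF perm3[OF s], of g] by (simp add: comp_def)
  also have "\<dots> = Fop d (act s f) b" by (simp add: g_def Fop_def act_def)
  finally show "act s (Fop d f) b = Fop d (act s f) b" .
qed

definition Ssub :: "nat \<Rightarrow> nat \<Rightarrow> ((nat\<Rightarrow>nat) \<Rightarrow> 'k::field) \<Rightarrow> ((nat\<Rightarrow>nat)\<Rightarrow>'k) set" where
  "Ssub d j \<chi> = {f \<in> Acomp d j. \<forall>s. s permutes {0,1,2::nat} \<longrightarrow> act s f = fscale (\<chi> s) f}"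

lemma Eop_Ssub: assumes f: "f \<in> Ssub d j \<chi>" and j: "1 \<le> j" shows "Eop d f \<in> Ssub d (j - 1) \<chi>"
proof -
  have a: "f \<in> Acomp d j" and b: "\<And>s. s permutes {0,1,2::nat} \<Longrightarrow> act s f = fscale (\<chi> s) f"
    using f by (auto simp: Ssub_def)
  have "act s (Eop d f) = fscale (\<chi> s) (Eop d f)" if "s permutes {0,1,2::nat}" for s
    using Eop_act[OF that] b[OF that] Eop_scale by metis
  then show ?thesis using Eop_Acomp[OF a j] by (simp add: Ssub_def)
qed

lemma Fop_Ssub: assumes f: "f \<in> Ssub d j \<chi>" shows "Fop d f \<in> Ssub d (Suc j) \<chi>"
proof -
  have a: "f \<in> Acomp d j" and b: "\<And>s. s permutes {0,1,2::nat} \<Longrightarrow> act s f = fscale (\<chi> s) f"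
    using f by (auto simp: Ssub_def)
  have "act s (Fop d f) = fscale (\<chi> s) (Fop d f)" if "s permutes {0,1,2::nat}" for s
    using Fop_act[OF that] b[OF that] Fop_scale by metis
  then show ?thesis using Fop_Acomp[OF a] by (simp add: Ssub_def)
qed

lemma act_add: "act s (f + g) = act s f + act s g" by (simp add: act_def fun_eq_iff)
lemma act_scale: "act s (fscale c f) = fscale c (act s f)" by (simp add: act_def fscale_def fun_eq_iff)

lemma subspace_Ssub: "fs.subspace (Ssub d j \<chi>)"
  unfolding fs.subspace_def
proof (intro conjI ballI allI)
  show "0 \<in> Ssub d j \<chi>" by (simp add: Ssub_def Acomp_def act_def fscale_def zero_fun_def)
  show "x + y \<in> Ssub d j \<chi>" if "x \<in> Ssub d j \<chi>" "y \<in> Ssub d j \<chi>" for x y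
    using that by (simp add: Ssub_def Acomp_def act_add) (simp add: fscale_def fun_eq_iff algebra_simps)
  show "fscale c x \<in> Ssub d j \<chi>" if "x \<in> Ssub d j \<chi>" for c x
    using that by (simp add: Ssub_def Acomp_def act_scale) (simp add: fscale_def fun_eq_iff algebra_simps)
qed

lemma linear_Eop: "Vector_Spaces.linear fscale fscale (Eop d :: ((nat\<Rightarrow>nat)\<Rightarrow>'k::field) \<Rightarrow> _)"
  unfolding Vector_Spaces.linear_iff by (simp add: fs.vector_space_axioms Eop_add Eop_scale)

lemma linear_EF: "Vector_Spaces.linear fscale fscale (\<lambda>f. Eop d (Fop d f) :: (nat\<Rightarrow>nat)\<Rightarrow>'k::field)"
  unfolding Vector_Spaces.linear_iff
  by (simp add: fs.vector_space_axioms Eop_add Eop_scale Fop_add Fop_scale)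

lemma fs_dim_0: "fs.dim ({0} :: ((nat\<Rightarrow>nat)\<Rightarrow>'k::field) set) = 0"
  using fs.dim_span[of "{} :: ((nat\<Rightarrow>nat)\<Rightarrow>'k::field) set"] fs.dim_eq_card_independent[OF fs.independent_empty] by simp

lemma ker_dim:
  fixes \<chi> :: "(nat\<Rightarrow>nat) \<Rightarrow> 'k::field_char_0"
  assumes j: "1 \<le> j" "2*(j-1) < 3*(d-1)"
    and B1: "finite B1" "Ssub d j \<chi> \<subseteq> fs.span B1"
    and B0: "finite B0" "Ssub d (j-1) \<chi> \<subseteq> fs.span B0"
  shows "fs.dim {f \<in> Ssub d j \<chi>. Eop d f = 0} + fs.dim (Ssub d (j-1) \<chi>) = fs.dim (Ssub d j \<chi>)"
proof -
  let ?V = "Ssub d j \<chi>" and ?W = "Ssub d (j-1) \<chi>"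
  have rn: "fs.dim ?V = fs.dim {f \<in> ?V. Eop d f = 0} + fs.dim (Eop d ` ?V)"
    by (rule fs.rank_nullity[OF subspace_Ssub B1 linear_Eop])
  have img: "Eop d ` ?V \<subseteq> ?W" using Eop_Ssub j(1) by blast
  have le1: "fs.dim (Eop d ` ?V) \<le> fs.dim ?W"
    by (rule fs.dim_le_of_fin[OF subset_trans[OF img fs.span_superset] B0])
  have rn2: "fs.dim ?W = fs.dim {f \<in> ?W. Eop d (Fop d f) = 0} + fs.dim ((\<lambda>f. Eop d (Fop d f)) ` ?W)"
    by (rule fs.rank_nullity[OF subspace_Ssub B0 linear_EF])
  have "{f \<in> ?W. Eop d (Fop d f) = 0} = {0}"
  proof -
    have "f = 0" if "f \<in> ?W" "Eop d (Fop d f) = 0" for f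
      using EF_inj[of f d "j-1"] that j(2) by (auto simp: Ssub_def)
    moreover have "(0::(nat\<Rightarrow>nat)\<Rightarrow>'k) \<in> ?W" using subspace_Ssub fs.subspace_0 by blast
    moreover have "Eop d (Fop d (0::(nat\<Rightarrow>nat)\<Rightarrow>'k)) = 0"
      unfolding Fop_0 by (simp add: Eop_def zero_fun_def)
    ultimately show ?thesis by auto
  qed
  then have rn2': "fs.dim ?W = fs.dim ((\<lambda>f. Eop d (Fop d f)) ` ?W)" using rn2 fs_dim_0 by simp
  have "(\<lambda>f. Eop d (Fop d f)) ` ?W \<subseteq> Eop d ` ?V"
  proof
    fix y assume "y \<in> (\<lambda>f. Eop d (Fop d f)) ` ?W"
    then obtain f where f: "f \<in> ?W" "y = Eop d (Fop d f)" by blast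
    have "Fop d f \<in> Ssub d (Suc (j - 1)) \<chi>" by (rule Fop_Ssub[OF f(1)])
    then have "Fop d f \<in> ?V" using j(1) by simp
    then show "y \<in> Eop d ` ?V" using f(2) by blast
  qed
  then have s1: "(\<lambda>f. Eop d (Fop d f)) ` ?W \<subseteq> fs.span (Eop d ` ?V)"
    by (rule subset_trans[OF _ fs.span_superset])
  have s2: "Eop d ` ?V \<subseteq> fs.span B0" using subset_trans[OF img B0(2)] .
  have le2: "fs.dim ?W \<le> fs.dim (Eop d ` ?V)"
    unfolding rn2' by (rule fs.dim_le_of_fin[OF s1 B0(1) s2])
  show ?thesis using rn le1 le2 by linarith
qed

lemma ker_dim0:
  fixes \<chi> :: "(nat\<Rightarrow>nat) \<Rightarrow> 'k::field"
  shows "{f \<in> Ssub d 0 \<chi>. Eop d f = 0} = Ssub d 0 \<chi>"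
proof -
  have "Eop d f = 0" if "f \<in> Ssub d 0 \<chi>" for f
    using that unfolding Ssub_def by (blast intro: Eop_Acomp0)
  then show ?thesis by blast
qed



lemma cond_iff: "(1 \<le> a k \<and> b = a(k := a k - 1)) \<longleftrightarrow> a = b(k := Suc (b k))"
  by (auto simp: fun_eq_iff split: if_splits)

lemma Emap_eq:
  fixes f :: "(nat\<Rightarrow>nat)\<Rightarrow>'k::field"
  assumes f: "f \<in> Acomp d j"
  shows "Emap d j f = Eop d f"
proof
  fix b
  define c where "c (k::nat) = (of_nat (Suc (b k) * (d - Suc (b k))) :: 'k)" for k
  have Ec: "Ecoef d a b = (\<Sum>k<3. if a = b(k := Suc (b k)) then c k else 0)" for a
    unfolding Ecoef_def c_def
  proof (intro sum.cong refl)
    fix k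
    show "(if 1 \<le> a k \<and> b = a(k := a k - 1) then of_nat (a k * (d - a k)) else 0) =
          (if a = b(k := Suc (b k)) then (of_nat (Suc (b k) * (d - Suc (b k))) :: 'k) else 0)"
      using cond_iff[of a k b] by auto
  qed
  have "Emap d j f b = (\<Sum>a\<in>mons d j. \<Sum>k<3. if a = b(k := Suc (b k)) then f a * c k else 0)"
    unfolding Emap_def Ec sum_distrib_left by (intro sum.cong refl) simp
  also have "\<dots> = (\<Sum>k<3. \<Sum>a\<in>mons d j. if a = b(k := Suc (b k)) then f a * c k else 0)"
    by (rule sum.swap)
  also have "\<dots> = (\<Sum>k<3. f (b(k := Suc (b k))) * c k)"
  proof (intro sum.cong refl)
    fix k
    show "(\<Sum>a\<in>mons d j. if a = b(k := Suc (b k)) then f a * c k else 0) = f (b(k := Suc (b k))) * c k"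
      using fin_mons[of d j] Acomp_nz[OF f, of "b(k := Suc (b k))"] by (auto simp: sum.delta')
  qed
  also have "\<dots> = Eop d f b" by (simp add: Eop_def c_def)
  finally show "Emap d j f b = Eop d f b" .
qed

lemma perm_vals:
  assumes "s permutes {0,1,2::nat}"
  shows "s 0 \<in> {0,1,2} \<and> s 1 \<in> {0,1,2} \<and> s 2 \<in> {0,1,2} \<and> s 0 \<noteq> s 1 \<and> s 0 \<noteq> s 2 \<and> s 1 \<noteq> s 2
     \<and> (\<forall>i. i \<notin> {0,1,2} \<longrightarrow> s i = i)"
proof -
  have inj: "inj s" using assms permutes_inj by blast
  have im: "s i \<in> {0,1,2}" if "i \<in> {0,1,2}" for i by (simp only: permutes_in_image[OF assms] that)
  have ni: "s i = i" if "i \<notin> {0,1,2}" for i using permutes_not_in[OF assms that] .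
  have d1: "s 0 \<noteq> s 1" using injD[OF inj, of 0 1] by auto
  have d2: "s 0 \<noteq> s 2" using injD[OF inj, of 0 2] by auto
  have d3: "s 1 \<noteq> s 2" using injD[OF inj, of 1 2] by auto
  have "s 0 \<in> {0,1,2}" "s 1 \<in> {0,1,2}" "s 2 \<in> {0,1,2}" using im by auto
  then show ?thesis using ni d1 d2 d3 by simp
qed

lemma perm_mons:
  assumes s: "s permutes {0,1,2::nat}" and b: "b \<in> mons d j"
  shows "b \<circ> s \<in> mons d j"
proof -
  have pv: "s 0 \<in> {0,1,2} \<and> s 1 \<in> {0,1,2} \<and> s 2 \<in> {0,1,2} \<and> s 0 \<noteq> s 1 \<and> s 0 \<noteq> s 2 \<and> s 1 \<noteq> s 2"
    "\<And>i. i \<notin> {0,1,2} \<Longrightarrow> s i = i" using perm_vals[OF s] by auto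
  have "(\<Sum>i\<in>{0,1,2::nat}. b i) = (\<Sum>i\<in>{0,1,2::nat}. b (s i))"
    using sum.permute[OF s, of b] by (simp add: comp_def)
  then have sum: "b (s 0) + b (s 1) + b (s 2) = j" using b by (simp add: mons_def)
  have "\<forall>i<3. b (s i) < d"
  proof (intro allI impI)
    fix i :: nat assume "i < 3"
    then have "s i \<in> {0,1,2}" using permutes_in_image[OF s, of i] by auto
    then show "b (s i) < d" using b by (auto simp: mons_def)
  qed
  moreover have "\<forall>i\<ge>3. b (s i) = 0" using pv(2) b by (auto simp: mons_def)
  ultimately show ?thesis using sum by (simp add: mons_def)
qed

lemma sort3: "\<exists>s. s permutes {0,1,2::nat} \<and> ((b::nat\<Rightarrow>nat) \<circ> s) 0 \<ge> (b \<circ> s) 1 \<and> (b \<circ> s) 1 \<ge> (b \<circ> s) 2"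
proof -
  let ?t = "Transposition.transpose :: nat \<Rightarrow> nat \<Rightarrow> nat \<Rightarrow> nat"
  have p01: "?t 0 1 permutes {0,1,2}" by (rule permutes_swap_id) auto
  have p12: "?t 1 2 permutes {0,1,2}" by (rule permutes_swap_id) auto
  have p02: "?t 0 2 permutes {0,1,2}" by (rule permutes_swap_id) auto
  have pa: "?t 0 1 \<circ> ?t 1 2 permutes {0,1,2}" by (rule permutes_compose[OF p12 p01])
  have pb: "?t 1 2 \<circ> ?t 0 1 permutes {0,1,2}" by (rule permutes_compose[OF p01 p12])
  consider "b 0 \<ge> b 1" "b 1 \<ge> b 2" | "b 0 \<ge> b 2" "b 2 \<ge> b 1" | "b 1 \<ge> b 0" "b 0 \<ge> b 2"
    | "b 1 \<ge> b 2" "b 2 \<ge> b 0" | "b 2 \<ge> b 0" "b 0 \<ge> b 1" | "b 2 \<ge> b 1" "b 1 \<ge> b 0"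
    by linarith
  then show ?thesis
  proof cases
    case 1 then show ?thesis by (intro exI[of _ id]) (simp add: permutes_id)
  next
    case 2 then show ?thesis by (intro exI[of _ "?t 1 2"] conjI p12) (simp_all add: transpose_def)
  next
    case 3 then show ?thesis by (intro exI[of _ "?t 0 1"] conjI p01) (simp_all add: transpose_def)
  next
    case 4 then show ?thesis by (intro exI[of _ "?t 0 1 \<circ> ?t 1 2"] conjI pa) (simp_all add: transpose_def)
  next
    case 5 then show ?thesis by (intro exI[of _ "?t 1 2 \<circ> ?t 0 1"] conjI pb) (simp_all add: transpose_def)
  next
    case 6 then show ?thesis by (intro exI[of _ "?t 0 2"] conjI p02) (simp_all add: transpose_def)
  qed
qed

lemma uniq_weak:
  fixes r :: "nat \<Rightarrow> nat"
  assumes s: "s permutes {0,1,2::nat}"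
    and r: "r 0 \<ge> r 1" "r 1 \<ge> r 2" and r': "(r \<circ> s) 0 \<ge> (r \<circ> s) 1" "(r \<circ> s) 1 \<ge> (r \<circ> s) 2"
  shows "r \<circ> s = r"
proof -
  have pv: "s 0 \<in> {0,1,2} \<and> s 1 \<in> {0,1,2} \<and> s 2 \<in> {0,1,2} \<and> s 0 \<noteq> s 1 \<and> s 0 \<noteq> s 2 \<and> s 1 \<noteq> s 2"
    "\<And>i. i \<notin> {0,1,2} \<Longrightarrow> s i = i" using perm_vals[OF s] by auto
  have vals: "r (s 0) = r 0 \<and> r (s 1) = r 1 \<and> r (s 2) = r 2"
    using pv(1) r r' by (auto simp: comp_def; linarith)
  show ?thesis
  proof
    fix i
    show "(r \<circ> s) i = r i"
    proof (cases "i = 0 \<or> i = 1 \<or> i = 2")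
      case True then show ?thesis using vals by auto
    next
      case False then have "s i = i" using pv(2) by auto
      then show ?thesis by simp
    qed
  qed
qed



lemma sum_fun_apply: "(\<Sum>x\<in>A. g x) b = (\<Sum>x\<in>A. g x b)"
  by (induction A rule: infinite_finite_induct) auto

lemma uniq_strict:
  fixes r :: "nat \<Rightarrow> nat"
  assumes s: "s permutes {0,1,2::nat}"
    and r: "r 0 > r 1" "r 1 > r 2" and r': "(r \<circ> s) 0 > (r \<circ> s) 1" "(r \<circ> s) 1 > (r \<circ> s) 2"
  shows "s = id"
proof -
  have pv: "s 0 \<in> {0,1,2} \<and> s 1 \<in> {0,1,2} \<and> s 2 \<in> {0,1,2} \<and> s 0 \<noteq> s 1 \<and> s 0 \<noteq> s 2 \<and> s 1 \<noteq> s 2"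
    "\<And>i. i \<notin> {0,1,2} \<Longrightarrow> s i = i" using perm_vals[OF s] by auto
  have vals: "s 0 = 0 \<and> s 1 = 1 \<and> s 2 = 2"
    using pv(1) r r' by (auto simp: comp_def; linarith)
  show ?thesis
  proof
    fix i
    show "s i = id i"
    proof (cases "i = 0 \<or> i = 1 \<or> i = 2")
      case True then show ?thesis using vals by auto
    next
      case False then show ?thesis using pv(2) by auto
    qed
  qed
qed

lemma perm_comp_cancel:
  assumes "t permutes S" shows "(b \<circ> t = c \<circ> t) \<longleftrightarrow> b = c"
proof
  assume h: "b \<circ> t = c \<circ> t"
  have "b = b \<circ> (t \<circ> inv t)" by (simp add: permutes_inv_o(1)[OF assms])
  also have "\<dots> = (b \<circ> t) \<circ> inv t" by (simp add: comp_assoc)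
  also have "\<dots> = (c \<circ> t) \<circ> inv t" using h by simp
  also have "\<dots> = c \<circ> (t \<circ> inv t)" by (simp add: comp_assoc)
  also have "\<dots> = c" by (simp add: permutes_inv_o(1)[OF assms])
  finally show "b = c" .
qed simp

lemma perm_permutation: "s permutes {0,1,2::nat} \<Longrightarrow> permutation s"
  unfolding permutation_permutes by (rule exI[of _ "{0,1,2}"]) simp

definition chis :: "(nat\<Rightarrow>nat) \<Rightarrow> 'k::field" where "chis s = of_int (sign s)"
definition chit :: "(nat\<Rightarrow>nat) \<Rightarrow> 'k::field" where "chit s = 1"

definition esg :: "(nat\<Rightarrow>nat) \<Rightarrow> (nat\<Rightarrow>nat) \<Rightarrow> 'k::field" where
  "esg r = (\<lambda>b. \<Sum>s\<in>{s. s permutes {0,1,2::nat}}. if b = r \<circ> s then of_int (sign s) else 0)"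

definition etr :: "(nat\<Rightarrow>nat) \<Rightarrow> (nat\<Rightarrow>nat) \<Rightarrow> 'k::field" where
  "etr r = (\<lambda>b. if \<exists>s. s permutes {0,1,2::nat} \<and> b = r \<circ> s then 1 else 0)"

definition Rs :: "nat \<Rightarrow> nat \<Rightarrow> (nat\<Rightarrow>nat) set" where
  "Rs d j = {r \<in> mons d j. r 1 < r 0 \<and> r 2 < r 1}"
definition Rt :: "nat \<Rightarrow> nat \<Rightarrow> (nat\<Rightarrow>nat) set" where
  "Rt d j = {r \<in> mons d j. r 1 \<le> r 0 \<and> r 2 \<le> r 1}"

lemma esg_act:
  assumes t: "t permutes {0,1,2::nat}"
  shows "act t (esg r) = fscale (chis t) (esg r :: _ \<Rightarrow> 'k::field)"
proof
  fix b
  have "act t (esg r) b = (\<Sum>p\<in>{s. s permutes {0,1,2::nat}}. if b \<circ> t = r \<circ> p then (of_int (sign p) :: 'k) else 0)"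
    by (simp add: act_def esg_def)
  also have "\<dots> = (\<Sum>p\<in>{s. s permutes {0,1,2::nat}}. if b \<circ> t = r \<circ> (p \<circ> t) then (of_int (sign (p \<circ> t)) :: 'k) else 0)"
    by (rule sum_permutations_compose_right[OF t])
  also have "\<dots> = (\<Sum>p\<in>{s. s permutes {0,1,2::nat}}. chis t * (if b = r \<circ> p then (of_int (sign p) :: 'k) else 0))"
  proof (intro sum.cong refl)
    fix p assume p: "p \<in> {s. s permutes {0,1,2::nat}}"
    have "(b \<circ> t = r \<circ> (p \<circ> t)) \<longleftrightarrow> b = r \<circ> p"
      using perm_comp_cancel[OF t, of b "r \<circ> p"] by (simp add: comp_assoc)
    moreover have "sign (p \<circ> t) = sign p * sign t"
      using sign_compose[OF perm_permutation perm_permutation[OF t], of p] p by simp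
    ultimately show "(if b \<circ> t = r \<circ> (p \<circ> t) then (of_int (sign (p \<circ> t)) :: 'k) else 0) =
        chis t * (if b = r \<circ> p then of_int (sign p) else 0)"
      by (simp add: chis_def)
  qed
  also have "\<dots> = fscale (chis t) (esg r) b"
    by (simp add: fscale_def esg_def sum_distrib_left)
  finally show "act t (esg r) b = fscale (chis t) (esg r :: _ \<Rightarrow> 'k) b" .
qed

lemma esg_Acomp:
  assumes r: "r \<in> mons d j" shows "(esg r :: _ \<Rightarrow> 'k::field) \<in> Acomp d j"
  unfolding Acomp_def
proof (intro CollectI allI impI)
  fix b assume b: "b \<notin> mons d j"
  have "b \<noteq> r \<circ> s" if "s permutes {0,1,2::nat}" for s
    using perm_mons[OF that r] b by auto
  then show "(esg r :: _ \<Rightarrow> 'k) b = 0" by (simp add: esg_def)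
qed

lemma esg_Ssub: "r \<in> Rs d j \<Longrightarrow> (esg r :: _ \<Rightarrow> 'k::field) \<in> Ssub d j chis"
  by (simp add: Ssub_def Rs_def esg_Acomp esg_act)

lemma etr_act:
  assumes t: "t permutes {0,1,2::nat}"
  shows "act t (etr r) = fscale (chit t) (etr r :: _ \<Rightarrow> 'k::field)"
proof
  fix b
  have "(\<exists>s. s permutes {0,1,2::nat} \<and> b \<circ> t = r \<circ> s) \<longleftrightarrow> (\<exists>s. s permutes {0,1,2::nat} \<and> b = r \<circ> s)"
  proof
    assume "\<exists>s. s permutes {0,1,2::nat} \<and> b \<circ> t = r \<circ> s"
    then obtain s where s: "s permutes {0,1,2::nat}" "b \<circ> t = r \<circ> s" by blast
    have "b = b \<circ> t \<circ> inv t" using permutes_inv_o(1)[OF t] by (simp add: comp_assoc)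
    also have "\<dots> = r \<circ> (s \<circ> inv t)" using s(2) by (simp add: comp_assoc)
    finally show "\<exists>s. s permutes {0,1,2::nat} \<and> b = r \<circ> s"
      using permutes_compose[OF permutes_inv[OF t] s(1)] by blast
  next
    assume "\<exists>s. s permutes {0,1,2::nat} \<and> b = r \<circ> s"
    then obtain s where s: "s permutes {0,1,2::nat}" "b = r \<circ> s" by blast
    then have "b \<circ> t = r \<circ> (s \<circ> t)" by (simp add: comp_assoc)
    then show "\<exists>s. s permutes {0,1,2::nat} \<and> b \<circ> t = r \<circ> s"
      using permutes_compose[OF t s(1)] by blast
  qed
  then show "act t (etr r) b = fscale (chit t) (etr r :: _ \<Rightarrow> 'k) b"
    by (simp add: act_def etr_def fscale_def chit_def)
qed

lemma etr_Acomp: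
  assumes r: "r \<in> mons d j" shows "(etr r :: _ \<Rightarrow> 'k::field) \<in> Acomp d j"
  unfolding Acomp_def
proof (intro CollectI allI impI)
  fix b assume b: "b \<notin> mons d j"
  have "b \<noteq> r \<circ> s" if "s permutes {0,1,2::nat}" for s
    using perm_mons[OF that r] b by auto
  then show "(etr r :: _ \<Rightarrow> 'k) b = 0" by (auto simp: etr_def)
qed

lemma etr_Ssub: "r \<in> Rt d j \<Longrightarrow> (etr r :: _ \<Rightarrow> 'k::field) \<in> Ssub d j chit"
  by (simp add: Ssub_def Rt_def etr_Acomp etr_act)

lemma esg_eval:
  assumes r: "r \<in> Rs d j" and r': "r' \<in> Rs d j"
  shows "(esg r :: _ \<Rightarrow> 'k::field) r' = (if r' = r then 1 else 0)"
proof -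
  have eq: "(r' = r \<circ> s) \<longleftrightarrow> (s = id \<and> r' = r)" if s: "s permutes {0,1,2::nat}" for s
  proof
    assume h: "r' = r \<circ> s"
    have "s = id" using uniq_strict[OF s, of r] r r' h by (auto simp: Rs_def)
    then show "s = id \<and> r' = r" using h by simp
  qed auto
  have "(esg r :: _ \<Rightarrow> 'k) r' = (\<Sum>s\<in>{s. s permutes {0,1,2::nat}}. if s = id then (if r' = r then of_int (sign s) else 0) else 0)"
    unfolding esg_def using eq by (intro sum.cong refl) auto
  also have "\<dots> = (if r' = r then 1 else 0)"
    using sum.delta[of "{s. s permutes {0,1,2::nat}}" id "\<lambda>s. if r' = r then of_int (sign s) else (0::'k)"]
      finite_permutations[of "{0,1,2::nat}"] permutes_id[of "{0,1,2::nat}"] by (simp add: sign_id)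
  finally show ?thesis .
qed

lemma etr_eval:
  assumes r: "r \<in> Rt d j" and r': "r' \<in> Rt d j"
  shows "(etr r :: _ \<Rightarrow> 'k::field) r' = (if r' = r then 1 else 0)"
proof -
  have "(\<exists>s. s permutes {0,1,2::nat} \<and> r' = r \<circ> s) \<longleftrightarrow> r' = r"
  proof
    assume "\<exists>s. s permutes {0,1,2::nat} \<and> r' = r \<circ> s"
    then obtain s where s: "s permutes {0,1,2::nat}" "r' = r \<circ> s" by blast
    have "r \<circ> s = r" using uniq_weak[OF s(1), of r] r r' s(2) by (auto simp: Rt_def)
    then show "r' = r" using s(2) by simp
  next
    assume "r' = r" then show "\<exists>s. s permutes {0,1,2::nat} \<and> r' = r \<circ> s"
      by (intro exI[of _ id]) (simp add: permutes_id)
  qed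
  then show ?thesis by (simp add: etr_def)
qed



lemma delta_basis:
  fixes v :: "(nat\<Rightarrow>nat) \<Rightarrow> (nat\<Rightarrow>nat) \<Rightarrow> 'k::field"
  assumes ev: "\<And>r r'. r \<in> R \<Longrightarrow> r' \<in> R \<Longrightarrow> v r r' = (if r' = r then 1 else 0)"
  shows "inj_on v R" "fs.independent (v ` R)"
proof -
  show inj: "inj_on v R"
  proof (rule inj_onI)
    fix r r' assume r: "r \<in> R" "r' \<in> R" "v r = v r'"
    have "v r r = 1" using ev[OF r(1) r(1)] by simp
    moreover have "v r' r = (if r = r' then 1 else 0)" using ev[OF r(2) r(1)] .
    ultimately show "r = r'" using r(3) by (auto split: if_splits)
  qed
  show "fs.independent (v ` R)"
    unfolding fs.dependent_def
  proof clarsimp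
    fix r assume r: "r \<in> R" and sp: "v r \<in> fs.span (v ` R - {v r})"
    let ?T = "{g :: (nat\<Rightarrow>nat)\<Rightarrow>'k. g r = 0}"
    have sT: "fs.subspace ?T" by (auto simp: fs.subspace_def fscale_def)
    have "v ` R - {v r} \<subseteq> ?T"
    proof
      fix g assume "g \<in> v ` R - {v r}"
      then obtain r' where r': "r' \<in> R" "g = v r'" "v r' \<noteq> v r" by blast
      then have "r' \<noteq> r" by blast
      then show "g \<in> ?T" using ev[OF r'(1) r] r'(2) by simp
    qed
    then have "fs.span (v ` R - {v r}) \<subseteq> ?T" using fs.span_minimal[OF _ sT] by blast
    then have "v r r = 0" using sp by blast
    then show False using ev[OF r r] by simp
  qed
qed

lemma Ssub_app:
  assumes "g \<in> Ssub d j \<chi>" "s permutes {0,1,2::nat}"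
  shows "g (r \<circ> s) = \<chi> s * g r"
proof -
  have "act s g = fscale (\<chi> s) g" using assms by (auto simp: Ssub_def)
  then have "act s g r = fscale (\<chi> s) g r" by simp
  then show ?thesis by (simp add: act_def fscale_def)
qed

lemma alt_zero:
  fixes g :: "(nat\<Rightarrow>nat)\<Rightarrow>'k::field_char_0"
  assumes g: "g \<in> Ssub d j chis" and pq: "p < 3" "q < 3" "p \<noteq> q" "b p = b q"
  shows "g b = 0"
proof -
  let ?t = "Transposition.transpose p q"
  have t: "?t permutes {0,1,2::nat}" using pq by (intro permutes_swap_id) auto
  have bt: "b \<circ> ?t = b" using pq(4) by (auto simp: fun_eq_iff transpose_def)
  have "g b = chis ?t * g b" using Ssub_app[OF g t, of b] bt by simp
  also have "chis ?t = (-1 :: 'k)" using pq(3) by (simp add: chis_def sign_swap_id)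
  finally have "g b = - g b" by simp
  then have "2 * g b = 0" by simp
  then show ?thesis by simp
qed

lemma fin_Rs: "finite (Rs d j)" using fin_mons[of d j] by (rule finite_subset[rotated]) (auto simp: Rs_def)
lemma fin_Rt: "finite (Rt d j)" using fin_mons[of d j] by (rule finite_subset[rotated]) (auto simp: Rt_def)

lemma span_sgn:
  fixes f :: "(nat\<Rightarrow>nat)\<Rightarrow>'k::field_char_0"
  assumes f: "f \<in> Ssub d j chis"
  shows "f = (\<Sum>r\<in>Rs d j. fscale (f r) (esg r))"
proof
  fix b
  have rhs: "(\<Sum>r\<in>Rs d j. fscale (f r) (esg r)) b = (\<Sum>r\<in>Rs d j. f r * esg r b)"
    by (simp add: sum_fun_apply fscale_def)
  have fA: "f \<in> Acomp d j" using f by (simp add: Ssub_def)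
  show "f b = (\<Sum>r\<in>Rs d j. fscale (f r) (esg r)) b"
    unfolding rhs
  proof (cases "b \<in> mons d j")
    case False
    then have "f b = 0" using fA by (simp add: Acomp_def)
    moreover have "(esg r :: _ \<Rightarrow> 'k) b = 0" if "r \<in> Rs d j" for r
      using esg_Acomp[of r d j] that False by (auto simp: Acomp_def Rs_def)
    ultimately show "f b = (\<Sum>r\<in>Rs d j. f r * esg r b)" by simp
  next
    case bm: True
    show "f b = (\<Sum>r\<in>Rs d j. f r * esg r b)"
    proof (cases "\<exists>p q. p < 3 \<and> q < 3 \<and> p \<noteq> q \<and> b p = b q")
      case True
      then obtain p q where pq: "p < 3" "q < 3" "p \<noteq> q" "b p = b q" by blast
      have "f b = 0" using alt_zero[OF f pq] .
      moreover have "(esg r :: _ \<Rightarrow> 'k) b = 0" if "r \<in> Rs d j" for r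
        using alt_zero[OF esg_Ssub[OF that] pq] .
      ultimately show ?thesis by simp
    next
      case False
      have dst: "b p \<noteq> b q" if "p < 3" "q < 3" "p \<noteq> q" for p q using False that by blast
      have dist: "b 0 \<noteq> b 1" "b 0 \<noteq> b 2" "b 1 \<noteq> b 2" using dst[of 0 1] dst[of 0 2] dst[of 1 2] by auto
      obtain \<sigma> where \<sigma>: "\<sigma> permutes {0,1,2::nat}" "(b \<circ> \<sigma>) 0 \<ge> (b \<circ> \<sigma>) 1" "(b \<circ> \<sigma>) 1 \<ge> (b \<circ> \<sigma>) 2"
        using sort3 by blast
      have pv: "\<sigma> 0 \<in> {0,1,2} \<and> \<sigma> 1 \<in> {0,1,2} \<and> \<sigma> 2 \<in> {0,1,2} \<and> \<sigma> 0 \<noteq> \<sigma> 1 \<and> \<sigma> 0 \<noteq> \<sigma> 2 \<and> \<sigma> 1 \<noteq> \<sigma> 2"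
        using perm_vals[OF \<sigma>(1)] by auto
      define r0 where "r0 = b \<circ> \<sigma>"
      have "r0 0 \<noteq> r0 1" "r0 1 \<noteq> r0 2" using pv dist by (auto simp: r0_def)
      then have r0: "r0 \<in> Rs d j" using \<sigma> perm_mons[OF \<sigma>(1) bm] by (auto simp: Rs_def r0_def)
      define s0 where "s0 = inv \<sigma>"
      have s0: "s0 permutes {0,1,2::nat}" unfolding s0_def by (rule permutes_inv[OF \<sigma>(1)])
      have b: "b = r0 \<circ> s0" unfolding r0_def s0_def
        using permutes_inv_o(1)[OF \<sigma>(1)] by (simp add: comp_assoc)
      have "f b = chis s0 * f r0" unfolding b by (rule Ssub_app[OF f s0])
      moreover have "(\<Sum>r\<in>Rs d j. f r * esg r b) = (\<Sum>r\<in>Rs d j. if r = r0 then chis s0 * f r0 else 0)"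
      proof (intro sum.cong refl)
        fix r assume r: "r \<in> Rs d j"
        have "(esg r :: _ \<Rightarrow> 'k) b = chis s0 * esg r r0" unfolding b by (rule Ssub_app[OF esg_Ssub[OF r] s0])
        then show "f r * esg r b = (if r = r0 then chis s0 * f r0 else 0)"
          using esg_eval[OF r r0] by auto
      qed
      moreover have "\<dots> = chis s0 * f r0" using fin_Rs r0 by simp
      ultimately show ?thesis by simp
    qed
  qed
qed

lemma span_tr:
  fixes f :: "(nat\<Rightarrow>nat)\<Rightarrow>'k::field"
  assumes f: "f \<in> Ssub d j chit"
  shows "f = (\<Sum>r\<in>Rt d j. fscale (f r) (etr r))"
proof
  fix b
  have rhs: "(\<Sum>r\<in>Rt d j. fscale (f r) (etr r)) b = (\<Sum>r\<in>Rt d j. f r * etr r b)"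
    by (simp add: sum_fun_apply fscale_def)
  have fA: "f \<in> Acomp d j" using f by (simp add: Ssub_def)
  show "f b = (\<Sum>r\<in>Rt d j. fscale (f r) (etr r)) b"
    unfolding rhs
  proof (cases "b \<in> mons d j")
    case False
    then have "f b = 0" using fA by (simp add: Acomp_def)
    moreover have "(etr r :: _ \<Rightarrow> 'k) b = 0" if "r \<in> Rt d j" for r
      using etr_Acomp[of r d j] that False by (auto simp: Acomp_def Rt_def)
    ultimately show "f b = (\<Sum>r\<in>Rt d j. f r * etr r b)" by simp
  next
    case bm: True
    obtain \<sigma> where \<sigma>: "\<sigma> permutes {0,1,2::nat}" "(b \<circ> \<sigma>) 0 \<ge> (b \<circ> \<sigma>) 1" "(b \<circ> \<sigma>) 1 \<ge> (b \<circ> \<sigma>) 2"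
      using sort3 by blast
    define r0 where "r0 = b \<circ> \<sigma>"
    have r0: "r0 \<in> Rt d j" using \<sigma> perm_mons[OF \<sigma>(1) bm] by (auto simp: Rt_def r0_def)
    define s0 where "s0 = inv \<sigma>"
    have s0: "s0 permutes {0,1,2::nat}" unfolding s0_def by (rule permutes_inv[OF \<sigma>(1)])
    have b: "b = r0 \<circ> s0" unfolding r0_def s0_def
      using permutes_inv_o(1)[OF \<sigma>(1)] by (simp add: comp_assoc)
    have "f b = chit s0 * f r0" unfolding b by (rule Ssub_app[OF f s0])
    moreover have "(\<Sum>r\<in>Rt d j. f r * etr r b) = (\<Sum>r\<in>Rt d j. if r = r0 then chit s0 * f r0 else 0)"
    proof (intro sum.cong refl)
      fix r assume r: "r \<in> Rt d j"
      have "(etr r :: _ \<Rightarrow> 'k) b = chit s0 * etr r r0" unfolding b by (rule Ssub_app[OF etr_Ssub[OF r] s0])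
      then show "f r * etr r b = (if r = r0 then chit s0 * f r0 else 0)"
        using etr_eval[OF r r0] by (auto simp: chit_def)
    qed
    moreover have "\<dots> = chit s0 * f r0" using fin_Rt r0 by simp
    ultimately show "f b = (\<Sum>r\<in>Rt d j. f r * etr r b)" by simp
  qed
qed

lemma dim_sgn:
  shows "fs.dim (Ssub d j (chis :: _ \<Rightarrow> 'k::field_char_0)) = card (Rs d j)"
    and "Ssub d j (chis :: _ \<Rightarrow> 'k) \<subseteq> fs.span (esg ` Rs d j)"
proof -
  let ?B = "(esg :: _ \<Rightarrow> _ \<Rightarrow> 'k) ` Rs d j"
  have ev: "\<And>r r'. r \<in> Rs d j \<Longrightarrow> r' \<in> Rs d j \<Longrightarrow> (esg r :: _ \<Rightarrow> 'k) r' = (if r' = r then 1 else 0)"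
    by (rule esg_eval)
  note db = delta_basis[of "Rs d j" esg, OF ev]
  show sp: "Ssub d j (chis :: _ \<Rightarrow> 'k) \<subseteq> fs.span ?B"
  proof
    fix f assume f: "f \<in> Ssub d j (chis :: _ \<Rightarrow> 'k)"
    have "(\<Sum>r\<in>Rs d j. fscale (f r) (esg r)) \<in> fs.span ?B"
      by (intro fs.span_sum fs.span_scale fs.span_base) auto
    then show "f \<in> fs.span ?B" using span_sgn[OF f] by simp
  qed
  have "?B \<subseteq> Ssub d j chis" by (auto intro: esg_Ssub)
  then have "card ?B = fs.dim (Ssub d j (chis :: _ \<Rightarrow> 'k))"
    using fs.basis_card_eq_dim[OF _ sp db(2)] by blast
  then show "fs.dim (Ssub d j (chis :: _ \<Rightarrow> 'k)) = card (Rs d j)"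
    using card_image[OF db(1)] by simp
qed

lemma dim_tr:
  shows "fs.dim (Ssub d j (chit :: _ \<Rightarrow> 'k::field)) = card (Rt d j)"
    and "Ssub d j (chit :: _ \<Rightarrow> 'k) \<subseteq> fs.span (etr ` Rt d j)"
proof -
  let ?B = "(etr :: _ \<Rightarrow> _ \<Rightarrow> 'k) ` Rt d j"
  have ev: "\<And>r r'. r \<in> Rt d j \<Longrightarrow> r' \<in> Rt d j \<Longrightarrow> (etr r :: _ \<Rightarrow> 'k) r' = (if r' = r then 1 else 0)"
    by (rule etr_eval)
  note db = delta_basis[of "Rt d j" etr, OF ev]
  show sp: "Ssub d j (chit :: _ \<Rightarrow> 'k) \<subseteq> fs.span ?B"
  proof
    fix f assume f: "f \<in> Ssub d j (chit :: _ \<Rightarrow> 'k)"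
    have "(\<Sum>r\<in>Rt d j. fscale (f r) (etr r)) \<in> fs.span ?B"
      by (intro fs.span_sum fs.span_scale fs.span_base) auto
    then show "f \<in> fs.span ?B" using span_tr[OF f] by simp
  qed
  have "?B \<subseteq> Ssub d j chit" by (auto intro: etr_Ssub)
  then have "card ?B = fs.dim (Ssub d j (chit :: _ \<Rightarrow> 'k))"
    using fs.basis_card_eq_dim[OF _ sp db(2)] by blast
  then show "fs.dim (Ssub d j (chit :: _ \<Rightarrow> 'k)) = card (Rt d j)"
    using card_image[OF db(1)] by simp
qed



lemma Rs_empty: "j < 3 \<Longrightarrow> Rs d j = {}"
  by (auto simp: Rs_def mons_def)

lemma card_Rs_Rt:
  assumes "3 \<le> j"
  shows "card (Rs d j) = card (Rt (d - 2) (j - 3))"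
proof -
  define f where "f r = r(0 := r 0 - 2, 1 := r 1 - 1)" for r :: "nat \<Rightarrow> nat"
  define g where "g r = r(0 := r 0 + 2, 1 := r 1 + 1)" for r :: "nat \<Rightarrow> nat"
  have "bij_betw f (Rs d j) (Rt (d - 2) (j - 3))"
  proof (rule bij_betw_byWitness[where f' = g])
    show "\<forall>a\<in>Rs d j. g (f a) = a"
      by (auto simp: Rs_def f_def g_def fun_eq_iff)
    show "\<forall>a\<in>Rt (d - 2) (j - 3). f (g a) = a"
      by (auto simp: Rt_def f_def g_def fun_eq_iff)
    show "f ` Rs d j \<subseteq> Rt (d - 2) (j - 3)"
    proof
      fix y assume "y \<in> f ` Rs d j"
      then obtain r where r: "r \<in> Rs d j" "y = f r" by blast
      have r1: "r 1 < r 0" "r 2 < r 1" "r 0 < d" "r 1 < d" "r 2 < d" "\<forall>i\<ge>3. r i = 0" "r 0 + r 1 + r 2 = j"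
        using r(1) by (auto simp: Rs_def mons_def)
      have "\<forall>i<3. y i < d - 2"
      proof (intro allI impI)
        fix i :: nat assume "i < 3"
        then have "i = 0 \<or> i = 1 \<or> i = 2" by auto
        then show "y i < d - 2" using r1 r(2) by (auto simp: f_def)
      qed
      moreover have "\<forall>i\<ge>3. y i = 0" using r1(6) r(2) by (auto simp: f_def)
      moreover have "y 0 + y 1 + y 2 = j - 3" using r1 r(2) by (simp add: f_def)
      moreover have "y 1 \<le> y 0" "y 2 \<le> y 1" using r1 r(2) by (auto simp: f_def)
      ultimately show "y \<in> Rt (d - 2) (j - 3)" by (simp add: Rt_def mons_def)
    qed
    show "g ` Rt (d - 2) (j - 3) \<subseteq> Rs d j"
    proof
      fix y assume "y \<in> g ` Rt (d - 2) (j - 3)"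
      then obtain r where r: "r \<in> Rt (d - 2) (j - 3)" "y = g r" by blast
      have r1: "r 1 \<le> r 0" "r 2 \<le> r 1" "r 0 < d - 2" "r 1 < d - 2" "r 2 < d - 2" "\<forall>i\<ge>3. r i = 0"
          "r 0 + r 1 + r 2 = j - 3"
        using r(1) by (auto simp: Rt_def mons_def)
      have "\<forall>i<3. y i < d"
      proof (intro allI impI)
        fix i :: nat assume "i < 3"
        then have "i = 0 \<or> i = 1 \<or> i = 2" by auto
        then show "y i < d" using r1 r(2) by (auto simp: g_def)
      qed
      moreover have "\<forall>i\<ge>3. y i = 0" using r1(6) r(2) by (auto simp: g_def)
      moreover have "y 0 + y 1 + y 2 = j" using r1 r(2) assms by (simp add: g_def)
      moreover have "y 1 < y 0" "y 2 < y 1" using r1 r(2) by (auto simp: g_def)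
      ultimately show "y \<in> Rs d j" by (simp add: Rs_def mons_def)
    qed
  qed
  then show ?thesis by (rule bij_betw_same_card)
qed



lemma sgn_eq:
  "sgn_mult (K :: 'k::field_char_0 itself) d (int j) = fs.dim {f \<in> Ssub d j (chis :: _ \<Rightarrow> 'k). Eop d f = 0}"
proof -
  have "{f \<in> (kerE d j :: ((nat\<Rightarrow>nat)\<Rightarrow>'k) set). \<forall>s. s permutes {0,1,2::nat} \<longrightarrow> act s f = fscale (of_int (sign s)) f}
     = {f \<in> Ssub d j (chis :: _ \<Rightarrow> 'k). Eop d f = 0}"
    by (auto simp: kerE_def Ssub_def chis_def Emap_eq)
  then show ?thesis by (simp add: sgn_mult_def)
qed

lemma triv_eq:
  "triv (K :: 'k::field_char_0 itself) d (int i) = fs.dim {f \<in> Ssub d i (chit :: _ \<Rightarrow> 'k). Eop d f = 0}"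
proof -
  have "{f \<in> (kerE d i :: ((nat\<Rightarrow>nat)\<Rightarrow>'k) set). \<forall>s. s permutes {0,1,2::nat} \<longrightarrow> act s f = f}
     = {f \<in> Ssub d i (chit :: _ \<Rightarrow> 'k). Eop d f = 0}"
  proof -
    have "fscale 1 f = f" for f :: "(nat\<Rightarrow>nat)\<Rightarrow>'k" by (simp add: fscale_def)
    then show ?thesis by (auto simp: kerE_def Ssub_def chit_def Emap_eq)
  qed
  then show ?thesis by (simp add: triv_def)
qed

lemma ksgn:
  assumes "1 \<le> j" "2*(j-1) < 3*(d-1)"
  shows "fs.dim {f \<in> Ssub d j (chis :: _ \<Rightarrow> 'k::field_char_0). Eop d f = 0} + card (Rs d (j-1)) = card (Rs d j)"
  using ker_dim[OF assms finite_imageI[OF fin_Rs] dim_sgn(2) finite_imageI[OF fin_Rs] dim_sgn(2)]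
  by (simp add: dim_sgn(1))

lemma ktr:
  assumes "1 \<le> j" "2*(j-1) < 3*(d-1)"
  shows "fs.dim {f \<in> Ssub d j (chit :: _ \<Rightarrow> 'k::field_char_0). Eop d f = 0} + card (Rt d (j-1)) = card (Rt d j)"
  using ker_dim[OF assms finite_imageI[OF fin_Rt] dim_tr(2) finite_imageI[OF fin_Rt] dim_tr(2)]
  by (simp add: dim_tr(1))

theorem proposition4p1:
  fixes K :: "'k::field_char_0 itself" and d j :: nat
  assumes "alg_closed K"
    and "d \<ge> 3"
    and "j \<le> (3 * (d - 1)) div 2"
  shows "sgn_mult K d (int j) = triv K (d - 2) (int j - 3)"
proof -
  have jb: "2 * j \<le> 3 * (d - 1)" using assms(3) by linarith
  let ?KS = "fs.dim {f \<in> Ssub d j (chis :: _ \<Rightarrow> 'k). Eop d f = 0}"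
  have L: "sgn_mult K d (int j) = ?KS" by (rule sgn_eq)
  show ?thesis
  proof (cases "j < 3")
    case True
    have "?KS = 0"
    proof (cases "j = 0")
      case True
      then show ?thesis using ker_dim0[of d "chis :: _ \<Rightarrow> 'k"] dim_sgn(1)[of d 0, where 'k='k] Rs_empty[of 0 d]
        by simp
    next
      case False
      have "2*(j-1) < 3*(d-1)" using jb False assms(2) by linarith
      then have "?KS + card (Rs d (j-1)) = card (Rs d j)" using ksgn[of j d] False by simp
      then show ?thesis using Rs_empty[of j d] \<open>j < 3\<close> by simp
    qed
    moreover have "triv K (d - 2) (int j - 3) = 0" using True by (simp add: triv_def)
    ultimately show ?thesis using L by simp
  next
    case False
    define i where "i = j - 3"
    have ij: "int j - 3 = int i" using False by (simp add: i_def)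
    let ?KT = "fs.dim {f \<in> Ssub (d-2) i (chit :: _ \<Rightarrow> 'k). Eop (d-2) f = 0}"
    have R: "triv K (d - 2) (int j - 3) = ?KT" unfolding ij by (rule triv_eq)
    have "2*(j-1) < 3*(d-1)" using jb False assms(2) by linarith
    then have KSf: "?KS + card (Rs d (j-1)) = card (Rs d j)" using ksgn[of j d] False by simp
    have cj: "card (Rs d j) = card (Rt (d-2) i)" using card_Rs_Rt[of j d] False by (simp add: i_def)
    show ?thesis
    proof (cases "i = 0")
      case True
      have "?KT = card (Rt (d-2) 0)"
        using ker_dim0[of "d-2" "chit :: _ \<Rightarrow> 'k"] dim_tr(1)[of "d-2" 0, where 'k='k] True by simp
      moreover have "card (Rs d (j-1)) = 0" using Rs_empty[of "j-1" d] True i_def False by simp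
      ultimately show ?thesis using L R KSf cj True by simp
    next
      case False
      have "2*(i-1) < 3*(d-2-1)" using jb False \<open>\<not> j < 3\<close> assms(2) unfolding i_def by linarith
      then have KTf: "?KT + card (Rt (d-2) (i-1)) = card (Rt (d-2) i)" using ktr[of i "d-2"] False by simp
      have "card (Rs d (j-1)) = card (Rt (d-2) (j-1-3))" using card_Rs_Rt[of "j-1" d] False i_def by simp
      moreover have "j - 1 - 3 = i - 1" by (simp add: i_def)
      ultimately show ?thesis using L R KSf KTf cj by simp
    qed
  qed
qed



end
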